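(* Let $\mathbf C$ be a clone $\tau$-algebra and $a,b\in C$ of finite dimension. Then: (1) for $f\in R_{\mathbf C}$ of arity $n$ and $g\in R_{\mathbf C}$ of arity $k$, $f$ and $g$ are similar if and only if $f(\mathsf e_1,\dots,\mathsf e_n)=g(\mathsf e_1,\dots,\mathsf e_k)$; (2) $R(a)$ is a block; (3) if $R(a)=R(b)$ then $a=b$; (4) $R_{\mathbf C}=\bigcup_{c\in\mathrm{Fi}\,\mathbf C}R(c)$ and it is a clone on the $\tau$-reduct $\mathbf C_\tau$; (5) the block $R(a)$ has arity $k$ if and only if $a$ has dimension $k$.
   Context: A clone $\tau$-algebra is an algebra $\mathbf C=(C,\sigma^{\mathbf C}\ (\sigma\in\tau),q_n^{\mathbf C}\ (n\ge0),\mathsf e_i^{\mathbf C}\ (i\ge1))$ with $\mathsf e_i$ nullary, $q_n$ of arity $n+1$, satisfying: (C1) $q_n(\mathsf e_i,x_1,\dots,x_n)=x_i$ ($1\le i\le n$); (C2) $q_n(\mathsf e_j,x_1,\dots,x_n)=\mathsf e_j$ ($j>n$); (C3) $q_n(x,\mathsf e_1,\dots,\mathsf e_n)=x$; (C4) $q_k(x,y_1,\dots,y_k)=q_n(x,y_1,\dots,y_k,\mathsf e_{k+1},\dots,\mathsf e_n)$ ($n>k$); (C5) $q_n(q_n(x,\mathbf y),\mathbf z)=q_n(x,q_n(y_1,\mathbf z),\dots,q_n(y_n,\mathbf z))$; (C6) $q_n(\sigma(x_1,\dots,x_k),\mathbf y)=\sigma(q_n(x_1,\mathbf y),\dots,q_n(x_k,\mathbf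 y))$ for $\sigma\in\tau$ of arity $k$. $a$ is independent of $\mathsf e_n$ if $q_n(a,\mathsf e_1,\dots,\mathsf e_{n-1},\mathsf e_{n+1})=a$; its dimension is $0$ if it depends on no $\mathsf e_n$, otherwise the largest $n$ it depends on (infinite if infinitely many). $\mathrm{Fi}\,\mathbf C$ is the set of finite-dimensional elements. A function $f:C^k\to C$ is $\mathbf C$-representable if $f(\mathsf e_1,\dots,\mathsf e_k)$ has dimension $\le k$ and $f(a_1,\dots,a_k)=q_k(f(\mathsf e_1,\dots,\mathsf e_k),a_1,\dots,a_k)$ for all $a_i$; $R_{\mathbf C}$ is the set of all of them. For finite-dimensional $a$, $R(a)$ is the set of $\mathbf C$-representable $f$ (of any arity $n$) with $f(\mathsf e_1,\dots,\mathsf e_n)=a$. For finitary operations $f:A^k\to A$, $g:A^n\to A$, write $f\preceq g$ if $k\le n$ and $f(\mathbf a)=g(\mathbf a,\mathbf b)$ for all $\mathbf a\in A^k$, $\mathbf b\in A^{n-k}$; $f,g$ are similar if $f\preceq g$ or $g\preceq f$. Similarity is an equivalence relation; its classes are blocks, each has a $\preceq$-least element, and the arity of a block is the arity of that least element. A clone on a $\tau$-algebra $\mathbf A$ is a set of finitary operations on $A$ (nullary included) containing all projections and all basic operations, closed under composition and under restriction (dropping a last argument on which the operation does not depend). *)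

theory Defs
  imports Main
begin

text \<open>The carrier of the clone tau-algebra is the whole type 'a
(carriers are nonempty since they contain e 1). The signature tau is the type 's
of operation symbols with arity function ar; sig s interprets symbol s, applied
to argument lists of length ar s. The operation q_n (arity n+1) is q n x ys with
length ys = n; the nullary constants are e i (i >= 1; e 0 is unused).

A finitary operation of arity k on 'a is a pair (k, f) with f :: 'a list => 'a,
normalised so that f xs = undefined whenever length xs differs from k. In this
way two operations are equal iff they have the same arity and agree on A^k.\<close>

definition es :: "(nat \<Rightarrow> 'a) \<Rightarrow> nat \<Rightarrow> 'a list" where
  "es e n = map e [1..<Suc n]"

definition clone_algebra ::
  "('s \<Rightarrow> nat) \<Rightarrow> ('s \<Rightarrow> 'a list \<Rightarrow> 'a) \<Rightarrow> (nat \<Rightarrow> 'a \<Rightarrow> 'a list \<Rightarrow> 'a) \<Rightarrow> (nat \<Rightarrow> 'a) \<Rightarrow> bool" where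
  "clone_algebra ar sig q e \<longleftrightarrow>
     (\<forall>n i ys. 1 \<le> i \<and> i \<le> n \<and> length ys = n \<longrightarrow> q n (e i) ys = ys ! (i - 1)) \<and>
     (\<forall>n j ys. n < j \<and> length ys = n \<longrightarrow> q n (e j) ys = e j) \<and>
     (\<forall>n x. q n x (es e n) = x) \<and>
     (\<forall>n k x ys. k < n \<and> length ys = k \<longrightarrow> q k x ys = q n x (ys @ map e [Suc k..<Suc n])) \<and>
     (\<forall>n x ys zs. length ys = n \<and> length zs = n \<longrightarrow>
        q n (q n x ys) zs = q n x (map (\<lambda>y. q n y zs) ys)) \<and>
     (\<forall>s n xs ys. length xs = ar s \<and> length ys = n \<longrightarrow>
        q n (sig s xs) ys = sig s (map (\<lambda>x. q n x ys) xs))"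

definition indep :: "(nat \<Rightarrow> 'a \<Rightarrow> 'a list \<Rightarrow> 'a) \<Rightarrow> (nat \<Rightarrow> 'a) \<Rightarrow> 'a \<Rightarrow> nat \<Rightarrow> bool" where
  "indep q e a n \<longleftrightarrow> q n a (map e [1..<n] @ [e (Suc n)]) = a"

definition depset :: "(nat \<Rightarrow> 'a \<Rightarrow> 'a list \<Rightarrow> 'a) \<Rightarrow> (nat \<Rightarrow> 'a) \<Rightarrow> 'a \<Rightarrow> nat set" where
  "depset q e a = {n. 1 \<le> n \<and> \<not> indep q e a n}"

definition finite_dim :: "(nat \<Rightarrow> 'a \<Rightarrow> 'a list \<Rightarrow> 'a) \<Rightarrow> (nat \<Rightarrow> 'a) \<Rightarrow> 'a \<Rightarrow> bool" where
  "finite_dim q e a \<longleftrightarrow> finite (depset q e a)"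

text \<open>dimension of a finite-dimensional element (0 if it depends on no e_n)\<close>
definition dim :: "(nat \<Rightarrow> 'a \<Rightarrow> 'a list \<Rightarrow> 'a) \<Rightarrow> (nat \<Rightarrow> 'a) \<Rightarrow> 'a \<Rightarrow> nat" where
  "dim q e a = (if depset q e a = {} then 0 else Max (depset q e a))"

definition Fi :: "(nat \<Rightarrow> 'a \<Rightarrow> 'a list \<Rightarrow> 'a) \<Rightarrow> (nat \<Rightarrow> 'a) \<Rightarrow> 'a set" where
  "Fi q e = {a. finite_dim q e a}"

type_synonym 'a op = "nat \<times> ('a list \<Rightarrow> 'a)"

definition is_op :: "'a op \<Rightarrow> bool" where
  "is_op F \<longleftrightarrow> (\<forall>xs. length xs \<noteq> fst F \<longrightarrow> snd F xs = undefined)"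

definition Ops :: "'a op set" where
  "Ops = {F. is_op F}"

definition mk_op :: "nat \<Rightarrow> ('a list \<Rightarrow> 'a) \<Rightarrow> 'a op" where
  "mk_op k f = (k, \<lambda>xs. if length xs = k then f xs else undefined)"

definition representable :: "(nat \<Rightarrow> 'a \<Rightarrow> 'a list \<Rightarrow> 'a) \<Rightarrow> (nat \<Rightarrow> 'a) \<Rightarrow> 'a op \<Rightarrow> bool" where
  "representable q e F \<longleftrightarrow> is_op F \<and>
     (let k = fst F; f = snd F in
       finite_dim q e (f (es e k)) \<and> dim q e (f (es e k)) \<le> k \<and>
       (\<forall>as. length as = k \<longrightarrow> f as = q k (f (es e k)) as))"

definition RC :: "(nat \<Rightarrow> 'a \<Rightarrow> 'a list \<Rightarrow> 'a) \<Rightarrow> (nat \<Rightarrow> 'a) \<Rightarrow> 'a op set" where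
  "RC q e = {F. representable q e F}"

definition Rof :: "(nat \<Rightarrow> 'a \<Rightarrow> 'a list \<Rightarrow> 'a) \<Rightarrow> (nat \<Rightarrow> 'a) \<Rightarrow> 'a \<Rightarrow> 'a op set" where
  "Rof q e a = {F \<in> RC q e. snd F (es e (fst F)) = a}"

definition prec_op :: "'a op \<Rightarrow> 'a op \<Rightarrow> bool" where
  "prec_op F G \<longleftrightarrow> fst F \<le> fst G \<and>
     (\<forall>as bs. length as = fst F \<and> length bs = fst G - fst F \<longrightarrow> snd F as = snd G (as @ bs))"

definition similar :: "'a op \<Rightarrow> 'a op \<Rightarrow> bool" where
  "similar F G \<longleftrightarrow> prec_op F G \<or> prec_op G F"

definition is_block :: "'a op set \<Rightarrow> bool" where
  "is_block B \<longleftrightarrow> (\<exists>F\<in>Ops. B = {G \<in> Ops. similar F G})"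

definition block_arity :: "'a op set \<Rightarrow> nat" where
  "block_arity B = fst (THE F. F \<in> B \<and> (\<forall>G\<in>B. prec_op F G))"

definition proj_op :: "nat \<Rightarrow> nat \<Rightarrow> 'a op" where
  "proj_op n i = mk_op n (\<lambda>xs. xs ! (i - 1))"

definition compose_op :: "'a op \<Rightarrow> nat \<Rightarrow> 'a op list \<Rightarrow> 'a op" where
  "compose_op F n Gs = mk_op n (\<lambda>xs. snd F (map (\<lambda>G. snd G xs) Gs))"

definition is_clone :: "('s \<Rightarrow> nat) \<Rightarrow> ('s \<Rightarrow> 'a list \<Rightarrow> 'a) \<Rightarrow> 'a op set \<Rightarrow> bool" where
  "is_clone ar sig K \<longleftrightarrow> K \<subseteq> Ops \<and>
     (\<forall>n i. 1 \<le> i \<and> i \<le> n \<longrightarrow> proj_op n i \<in> K) \<and>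
     (\<forall>s. mk_op (ar s) (sig s) \<in> K) \<and>
     (\<forall>F\<in>K. \<forall>n Gs. length Gs = fst F \<and> (\<forall>G\<in>set Gs. G \<in> K \<and> fst G = n) \<longrightarrow>
        compose_op F n Gs \<in> K) \<and>
     (\<forall>F\<in>K. \<forall>n. fst F = Suc n \<and>
        (\<forall>xs b b'. length xs = n \<longrightarrow> snd F (xs @ [b]) = snd F (xs @ [b'])) \<longrightarrow>
        mk_op n (\<lambda>xs. snd F (xs @ [undefined])) \<in> K)"

end

theory Submission imports Defs begin
lemma es_length[simp]: "length (es e n) = n" by (simp add: es_def del: upt_Suc)
lemma es_nth[simp]: "i < n \<Longrightarrow> es e n ! i = e (Suc i)" by (simp add: es_def del: upt_Suc)
lemma es_append: "n \<le> m \<Longrightarrow> es e n @ map e [Suc n..<Suc m] = es e m"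
  by (rule nth_equalityI) (auto simp: nth_append intro!: arg_cong[where f=e])
lemma es_take: "k \<le> n \<Longrightarrow> take k (es e n) = es e k"
  by (rule nth_equalityI) auto
lemma es_Suc: "es e (Suc n) = es e n @ [e (Suc n)]"
  using es_append[of n "Suc n" e] by simp
lemma map_upt_es: "1 \<le> j \<Longrightarrow> map e [1..<j] = es e (j - 1)"
  by (simp add: es_def del: upt_Suc)

lemma mk_op_fst[simp]: "fst (mk_op k f) = k" by (simp add: mk_op_def)
lemma mk_op_snd: "snd (mk_op k f) xs = (if length xs = k then f xs else undefined)"
  by (simp add: mk_op_def)
lemma mk_op_is_op[simp]: "is_op (mk_op k f)" by (simp add: mk_op_def is_op_def)

lemma op_eqI:
  assumes "is_op F" "is_op G" "fst F = fst G" "\<And>as. length as = fst F \<Longrightarrow> snd F as = snd G as"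
  shows "F = G"
proof -
  have "snd F = snd G"
  proof
    fix xs show "snd F xs = snd G xs"
      using assms unfolding is_op_def by (cases "length xs = fst F") auto
  qed
  then show ?thesis using assms(3) by (simp add: prod_eq_iff)
qed

lemma prec_fst: "prec_op F G \<Longrightarrow> fst F \<le> fst G" by (simp add: prec_op_def)

lemma dim_le_I:
  assumes "\<And>j. k < j \<Longrightarrow> indep q e c j"
  shows "finite_dim q e c \<and> dim q e c \<le> k"
proof -
  have sub: "depset q e c \<subseteq> {1..k}"
  proof
    fix x assume "x \<in> depset q e c"
    then show "x \<in> {1..k}" using assms[of x] by (cases "k < x") (auto simp: depset_def)
  qed
  then have f: "finite (depset q e c)" using finite_subset by blast
  moreover have "dim q e c \<le> k"
    using sub f by (auto simp: dim_def)
  ultimately show ?thesis by (simp add: finite_dim_def)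
qed

lemma indep_gt_dim:
  assumes "finite_dim q e c" "dim q e c < j" "1 \<le> j"
  shows "indep q e c j"
proof (rule ccontr)
  assume "\<not> indep q e c j"
  then have "j \<in> depset q e c" using assms(3) by (simp add: depset_def)
  then have "j \<le> Max (depset q e c)" using assms(1) by (simp add: finite_dim_def)
  then show False using assms(2) \<open>j \<in> depset q e c\<close> by (auto simp: dim_def split: if_splits)
qed

locale ca =
  fixes ar :: "'s \<Rightarrow> nat" and sig :: "'s \<Rightarrow> 'a list \<Rightarrow> 'a"
    and q :: "nat \<Rightarrow> 'a \<Rightarrow> 'a list \<Rightarrow> 'a" and e :: "nat \<Rightarrow> 'a"
  assumes CA: "clone_algebra ar sig q e"
begin

lemma C1: "1 \<le> i \<Longrightarrow> i \<le> n \<Longrightarrow> length ys = n \<Longrightarrow> q n (e i) ys = ys ! (i - 1)"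
  using conjunct1[OF CA[unfolded clone_algebra_def]] by blast
lemma C2: "n < j \<Longrightarrow> length ys = n \<Longrightarrow> q n (e j) ys = e j"
  using conjunct1[OF conjunct2[OF CA[unfolded clone_algebra_def]]] by blast
lemma C3: "q n x (es e n) = x"
  using conjunct1[OF conjunct2[OF conjunct2[OF CA[unfolded clone_algebra_def]]]] by blast
lemma C4: "k < n \<Longrightarrow> length ys = k \<Longrightarrow> q k x ys = q n x (ys @ map e [Suc k..<Suc n])"
  using conjunct1[OF conjunct2[OF conjunct2[OF conjunct2[OF CA[unfolded clone_algebra_def]]]]] by blast
lemma C5: "length ys = n \<Longrightarrow> length zs = n \<Longrightarrow> q n (q n x ys) zs = q n x (map (\<lambda>y. q n y zs) ys)"
  using conjunct1[OF conjunct2[OF conjunct2[OF conjunct2[OF conjunct2[OF CA[unfolded clone_algebra_def]]]]]] by blast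
lemma C6: "length xs = ar s \<Longrightarrow> length ys = n \<Longrightarrow> q n (sig s xs) ys = sig s (map (\<lambda>x. q n x ys) xs)"
  using conjunct2[OF conjunct2[OF conjunct2[OF conjunct2[OF conjunct2[OF CA[unfolded clone_algebra_def]]]]]] by blast

lemma C4': "n \<le> M \<Longrightarrow> length xs = n \<Longrightarrow> q n x xs = q M x (xs @ map e [Suc n..<Suc M])"
  using C4[of n M xs x] by (cases "n = M") auto

lemma map_q_es: "k \<le> n \<Longrightarrow> length zs = n \<Longrightarrow> map (\<lambda>y. q n y zs) (es e k) = take k zs"
  by (rule nth_equalityI) (auto simp: C1)

lemma L1:
  assumes ind: "indep q e a (Suc m)" and len: "length ys = Suc m"
  shows "q (Suc m) a ys = q m a (take m ys)"
proof -
  let ?u = "es e m @ [e (Suc (Suc m))]"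
  have a: "q (Suc m) a ?u = a" using ind unfolding indep_def using map_upt_es[of "Suc m" e] by simp
  have A: "q (Suc m) a zs = q (Suc m) a (take m zs @ [e (Suc (Suc m))])" if "length zs = Suc m" for zs
  proof -
    have "q (Suc m) a zs = q (Suc m) (q (Suc m) a ?u) zs" using a by simp
    also have "\<dots> = q (Suc m) a (map (\<lambda>y. q (Suc m) y zs) ?u)"
      using that by (simp add: C5)
    also have "map (\<lambda>y. q (Suc m) y zs) ?u = take m zs @ [e (Suc (Suc m))]"
      using that by (simp add: map_q_es C2)
    finally show ?thesis .
  qed
  have "q m a (take m ys) = q (Suc m) a (take m ys @ [e (Suc m)])"
    using C4[of m "Suc m" "take m ys" a] len by simp
  also have "\<dots> = q (Suc m) a (take m ys @ [e (Suc (Suc m))])"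
    using A[of "take m ys @ [e (Suc m)]"] len by simp
  also have "\<dots> = q (Suc m) a ys" using A[OF len] by simp
  finally show ?thesis by simp
qed

lemma L2:
  assumes fd: "finite_dim q e c" and dk: "dim q e c \<le> k"
  shows "k \<le> M \<Longrightarrow> length ys = M \<Longrightarrow> q M c ys = q k c (take k ys)"
proof (induction M arbitrary: ys)
  case 0 then show ?case by simp
next
  case (Suc M)
  show ?case
  proof (cases "k = Suc M")
    case True then show ?thesis using Suc by simp
  next
    case False
    then have kM: "k \<le> M" using Suc by simp
    have "indep q e c (Suc M)" using indep_gt_dim[OF fd] dk kM by simp
    then have "q (Suc M) c ys = q M c (take M ys)" using L1 Suc by blast
    also have "\<dots> = q k c (take k ys)" using Suc.IH[OF kM] Suc kM by (simp add: min_def)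
    finally show ?thesis .
  qed
qed

lemma L9:
  assumes fd: "finite_dim q e c" and dk: "dim q e c \<le> k"
    and lc: "length cs = k" and lx: "length xs = n"
  shows "q n (q k c cs) xs = q k c (map (\<lambda>y. q n y xs) cs)"
proof -
  define M where "M = max k n"
  define p1 where "p1 = map e [Suc k..<Suc M]"
  define p2 where "p2 = map e [Suc n..<Suc M]"
  have l2: "length (xs @ p2) = M" using lx by (simp add: p2_def M_def)
  have l1: "length (cs @ p1) = M" using lc by (simp add: p1_def M_def)
  have s1: "q n (q k c cs) xs = q M (q k c cs) (xs @ p2)"
    using C4'[of n M xs] lx by (simp add: M_def p2_def)
  have s2: "q k c cs = q M c (cs @ p1)"
    using C4'[of k M cs] lc by (simp add: M_def p1_def)
  have s3: "q M (q M c (cs @ p1)) (xs @ p2) = q M c (map (\<lambda>y. q M y (xs @ p2)) (cs @ p1))"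
    using C5 l1 l2 by blast
  have s4: "q M c (map (\<lambda>y. q M y (xs @ p2)) (cs @ p1)) = q k c (take k (map (\<lambda>y. q M y (xs @ p2)) (cs @ p1)))"
    using L2[OF fd dk, of M] l1 by (simp add: M_def)
  have s5: "take k (map (\<lambda>y. q M y (xs @ p2)) (cs @ p1)) = map (\<lambda>y. q M y (xs @ p2)) cs"
    using lc by simp
  have s6: "map (\<lambda>y. q M y (xs @ p2)) cs = map (\<lambda>y. q n y xs) cs"
    using C4'[of n M xs] lx by (simp add: M_def p2_def)
  show ?thesis using s1 s2 s3 s4 s5 s6 by simp
qed

lemma L8:
  assumes fd: "finite_dim q e c" and dk: "dim q e c \<le> k"
    and lc: "length cs = k" and ind: "\<forall>y\<in>set cs. indep q e y j" and j: "1 \<le> j"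
  shows "indep q e (q k c cs) j"
proof -
  let ?u = "map e [1..<j] @ [e (Suc j)]"
  have lu: "length ?u = j" using j by simp
  have "q j (q k c cs) ?u = q k c (map (\<lambda>y. q j y ?u) cs)"
    using L9[OF fd dk lc lu] .
  also have "map (\<lambda>y. q j y ?u) cs = cs"
    using ind by (induction cs) (auto simp: indep_def)
  finally show ?thesis by (simp add: indep_def)
qed


abbreviation cv :: "'a op \<Rightarrow> 'a" where "cv F \<equiv> snd F (es e (fst F))"

lemma RC_iff: "F \<in> RC q e \<longleftrightarrow> is_op F \<and> finite_dim q e (cv F) \<and> dim q e (cv F) \<le> fst F \<and>
    (\<forall>as. length as = fst F \<longrightarrow> snd F as = q (fst F) (cv F) as)"
  by (simp only: RC_def representable_def Let_def mem_Collect_eq)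

lemma RC_D:
  assumes "F \<in> RC q e"
  shows "is_op F" "finite_dim q e (cv F)" "dim q e (cv F) \<le> fst F"
    "length as = fst F \<Longrightarrow> snd F as = q (fst F) (cv F) as"
  using assms unfolding RC_iff by blast+

lemma RC_I:
  assumes "is_op F" "finite_dim q e (cv F)" "dim q e (cv F) \<le> fst F"
    "\<And>as. length as = fst F \<Longrightarrow> snd F as = q (fst F) (cv F) as"
  shows "F \<in> RC q e"
  unfolding RC_iff using assms by blast

lemma prec_cv:
  assumes p: "prec_op F G" shows "cv F = cv G"
proof -
  have le: "fst F \<le> fst G" and h: "\<forall>as bs. length as = fst F \<and> length bs = fst G - fst F \<longrightarrow> snd F as = snd G (as @ bs)"
    using p unfolding prec_op_def by blast+
  have "snd F (es e (fst F)) = snd G (es e (fst F) @ map e [Suc (fst F)..<Suc (fst G)])"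
    using h[rule_format, of "es e (fst F)" "map e [Suc (fst F)..<Suc (fst G)]"] by simp
  then show ?thesis using es_append[OF le, of e] by simp
qed

lemma cv_prec:
  assumes F: "F \<in> RC q e" and G: "G \<in> RC q e" and eq: "cv F = cv G" and le: "fst F \<le> fst G"
  shows "prec_op F G"
  unfolding prec_op_def
proof (intro conjI le allI impI)
  fix as bs :: "'a list" assume l: "length as = fst F \<and> length bs = fst G - fst F"
  have "snd G (as @ bs) = q (fst G) (cv G) (as @ bs)" using RC_D(4)[OF G, of "as @ bs"] l le by simp
  also have "\<dots> = q (fst F) (cv F) as"
    using L2[OF RC_D(2)[OF F] RC_D(3)[OF F], of "fst G" "as @ bs"] eq l le by simp
  also have "\<dots> = snd F as" using RC_D(4)[OF F, of as] l by simp
  finally show "snd F as = snd G (as @ bs)" by simp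
qed

lemma part1:
  assumes F: "F \<in> RC q e" and G: "G \<in> RC q e"
  shows "similar F G \<longleftrightarrow> cv F = cv G"
proof
  assume "similar F G" then show "cv F = cv G" unfolding similar_def
    using prec_cv[of F G] prec_cv[of G F] by auto
next
  assume eq: "cv F = cv G"
  show "similar F G"
  proof (cases "fst F \<le> fst G")
    case True then show ?thesis using cv_prec[OF F G eq] by (simp add: similar_def)
  next
    case False then show ?thesis using cv_prec[OF G F eq[symmetric]] by (simp add: similar_def)
  qed
qed

definition F0 :: "'a \<Rightarrow> 'a op" where "F0 a = mk_op (dim q e a) (q (dim q e a) a)"

lemma F0_fst[simp]: "fst (F0 a) = dim q e a" by (simp add: F0_def)
lemma F0_cv[simp]: "cv (F0 a) = a" by (simp add: F0_def mk_op_snd C3)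
lemma F0_cv'[simp]: "snd (F0 a) (es e (dim q e a)) = a" by (simp add: F0_def mk_op_snd C3)

lemma F0_Rof: "finite_dim q e a \<Longrightarrow> F0 a \<in> Rof q e a"
  unfolding Rof_def by (auto intro!: RC_I simp: F0_def mk_op_snd C3)

lemma Rof_dim: "G \<in> Rof q e a \<Longrightarrow> dim q e a \<le> fst G"
  unfolding Rof_def using RC_D(3) by auto

lemma prec_F0:
  assumes fd: "finite_dim q e a" and p: "prec_op G (F0 a)" and G: "is_op G"
  shows "G = F0 a"
proof -
  let ?n = "dim q e a" and ?m = "fst G"
  have mn: "?m \<le> ?n" using prec_fst[OF p] by simp
  have eqn: "snd G as = q ?n a (as @ bs)" if "length as = ?m" "length bs = ?n - ?m" for as bs
    using p that unfolding prec_op_def by (simp add: F0_def mk_op_snd)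
  have "?m = ?n"
  proof (rule ccontr)
    assume "?m \<noteq> ?n"
    then have lt: "?m < ?n" using mn by simp
    then have ne: "depset q e a \<noteq> {}" by (auto simp: dim_def)
    then have "?n \<in> depset q e a" using fd by (simp add: dim_def finite_dim_def)
    then have ni: "\<not> indep q e a ?n" by (simp add: depset_def)
    have "snd G (es e ?m) = q ?n a (es e ?m @ map e [Suc ?m..<Suc ?n])"
      by (rule eqn) auto
    also have "\<dots> = a" using es_append[of ?m ?n e] mn by (simp add: C3)
    finally have 1: "snd G (es e ?m) = a" .
    have "snd G (es e ?m) = q ?n a (es e ?m @ (map e [Suc ?m..<?n] @ [e (Suc ?n)]))"
      by (rule eqn) (use lt in auto)
    also have "es e ?m @ (map e [Suc ?m..<?n] @ [e (Suc ?n)]) = map e [1..<?n] @ [e (Suc ?n)]"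
      using es_append[of ?m "?n - 1" e] map_upt_es[of ?n e] lt by simp
    finally have "q ?n a (map e [1..<?n] @ [e (Suc ?n)]) = a" using 1 by simp
    then show False using ni by (simp add: indep_def)
  qed
  then show ?thesis
    using eqn[of _ "[]"] G by (intro op_eqI) (auto simp: F0_def mk_op_snd)
qed

lemma block_eq:
  assumes fd: "finite_dim q e a"
  shows "Rof q e a = {G \<in> Ops. similar (F0 a) G}"
proof
  show "Rof q e a \<subseteq> {G \<in> Ops. similar (F0 a) G}"
  proof
    fix G assume G: "G \<in> Rof q e a"
    then have "G \<in> RC q e" "cv G = a" by (auto simp: Rof_def)
    moreover have "F0 a \<in> RC q e" using F0_Rof[OF fd] by (simp add: Rof_def)
    ultimately have "similar (F0 a) G" using part1[of "F0 a" G] by simp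
    then show "G \<in> {G \<in> Ops. similar (F0 a) G}"
      using RC_D(1)[OF \<open>G \<in> RC q e\<close>] by (simp add: Ops_def)
  qed
next
  show "{G \<in> Ops. similar (F0 a) G} \<subseteq> Rof q e a"
  proof
    fix G assume "G \<in> {G \<in> Ops. similar (F0 a) G}"
    then have G: "is_op G" and s: "similar (F0 a) G" by (auto simp: Ops_def)
    show "G \<in> Rof q e a"
    proof (cases "prec_op G (F0 a)")
      case True
      then show ?thesis using prec_F0[OF fd True G] F0_Rof[OF fd] by simp
    next
      case False
      then have p: "prec_op (F0 a) G" using s by (simp add: similar_def)
      let ?n = "dim q e a" and ?m = "fst G"
      have mn: "?n \<le> ?m" using prec_fst[OF p] by simp
      have gy: "snd G ys = q ?m a ys" if l: "length ys = ?m" for ys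
      proof -
        have "snd G ys = snd G (take ?n ys @ drop ?n ys)" by simp
        also have "\<dots> = snd (F0 a) (take ?n ys)"
          using p l mn unfolding prec_op_def by (metis length_drop length_take min.absorb2 F0_fst)
        also have "\<dots> = q ?n a (take ?n ys)" using l mn by (simp add: F0_def mk_op_snd)
        also have "\<dots> = q ?m a ys" using L2[OF fd order_refl mn l] by simp
        finally show ?thesis .
      qed
      have cvG: "cv G = a" using gy[of "es e ?m"] by (simp add: C3)
      have "G \<in> RC q e" using G fd mn gy cvG by (intro RC_I) auto
      then show ?thesis using cvG by (simp add: Rof_def)
    qed
  qed
qed

lemma part5:
  assumes fd: "finite_dim q e a"
  shows "block_arity (Rof q e a) = dim q e a"
proof -
  have F0R: "F0 a \<in> Rof q e a" using F0_Rof[OF fd] .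
  have "prec_op (F0 a) G" if G: "G \<in> Rof q e a" for G
  proof -
    have "G \<in> RC q e" "cv G = a" using G by (auto simp: Rof_def)
    moreover have "F0 a \<in> RC q e" using F0R by (simp add: Rof_def)
    ultimately show ?thesis using cv_prec[of "F0 a" G] Rof_dim[OF G] by simp
  qed
  then have P: "F0 a \<in> Rof q e a \<and> (\<forall>G\<in>Rof q e a. prec_op (F0 a) G)"
    using F0R by blast
  have U: "F' = F0 a" if "F' \<in> Rof q e a \<and> (\<forall>G\<in>Rof q e a. prec_op F' G)" for F'
  proof -
    have "prec_op F' (F0 a)" using that P by blast
    moreover have "is_op F'" using that RC_D(1) by (auto simp: Rof_def)
    ultimately show ?thesis using prec_F0[OF fd] by blast
  qed
  have "(THE F. F \<in> Rof q e a \<and> (\<forall>G\<in>Rof q e a. prec_op F G)) = F0 a"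
    using P U by (rule the_equality)
  then show ?thesis by (simp add: block_arity_def)
qed


lemma indep_e: "1 \<le> i \<Longrightarrow> i < j \<Longrightarrow> indep q e (e i) j"
  unfolding indep_def by (subst C1) (auto simp: nth_append)

lemma proj_RC:
  assumes i: "1 \<le> i" "i \<le> n"
  shows "proj_op n i \<in> RC q e"
proof -
  have cvp: "cv (proj_op n i) = e i" using i by (simp add: proj_op_def mk_op_snd)
  show ?thesis
  proof (rule RC_I)
    show "is_op (proj_op n i)" by (simp add: proj_op_def)
    have "finite_dim q e (e i) \<and> dim q e (e i) \<le> n"
      using i by (intro dim_le_I indep_e) auto
    then show "finite_dim q e (cv (proj_op n i))" "dim q e (cv (proj_op n i)) \<le> fst (proj_op n i)"
      using cvp by (auto simp: proj_op_def)
    fix as :: "'a list" assume "length as = fst (proj_op n i)"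
    then show "snd (proj_op n i) as = q (fst (proj_op n i)) (cv (proj_op n i)) as"
      using i cvp by (simp add: proj_op_def mk_op_snd C1)
  qed
qed

lemma sig_RC: "mk_op (ar s) (sig s) \<in> RC q e"
proof -
  let ?k = "ar s"
  let ?c = "sig s (es e ?k)"
  have cvs: "cv (mk_op ?k (sig s)) = ?c" by (simp add: mk_op_snd)
  have ind: "indep q e ?c j" if j: "?k < j" for j
  proof -
    let ?u = "map e [1..<j] @ [e (Suc j)]"
    have lu: "length ?u = j" using j by simp
    have "q j ?c ?u = sig s (map (\<lambda>x. q j x ?u) (es e ?k))" using C6[of "es e ?k" s ?u j] lu by simp
    also have "map (\<lambda>x. q j x ?u) (es e ?k) = take ?k ?u" using map_q_es[of ?k j ?u] j lu by simp
    also have "take ?k ?u = es e ?k"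
      using j map_upt_es[of j e] es_take[of ?k "j - 1" e] by simp
    finally show ?thesis by (simp add: indep_def)
  qed
  show ?thesis
  proof (rule RC_I)
    show "is_op (mk_op ?k (sig s))" by simp
    have "finite_dim q e ?c \<and> dim q e ?c \<le> ?k" using ind by (intro dim_le_I) auto
    then show "finite_dim q e (cv (mk_op ?k (sig s)))" "dim q e (cv (mk_op ?k (sig s))) \<le> fst (mk_op ?k (sig s))"
      using cvs by auto
    fix as :: "'a list" assume l: "length as = fst (mk_op ?k (sig s))"
    then have "q ?k ?c as = sig s (take ?k as)" by (simp add: C6 map_q_es)
    then show "snd (mk_op ?k (sig s)) as = q (fst (mk_op ?k (sig s))) (cv (mk_op ?k (sig s))) as"
      using l cvs by (simp add: mk_op_snd)
  qed
qed

lemma comp_RC: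
  assumes F: "F \<in> RC q e" and lG: "length Gs = fst F"
    and Gs: "\<forall>G\<in>set Gs. G \<in> RC q e \<and> fst G = n"
  shows "compose_op F n Gs \<in> RC q e"
proof -
  let ?H = "compose_op F n Gs"
  let ?k = "fst F"
  define cs where "cs = map (\<lambda>G. snd G (es e n)) Gs"
  have lc: "length cs = ?k" using lG by (simp add: cs_def)
  have mapG: "map (\<lambda>G. snd G xs) Gs = map (\<lambda>y. q n y xs) cs" if "length xs = n" for xs
    unfolding cs_def map_map
  proof (rule map_cong[OF refl])
    fix G assume "G \<in> set Gs"
    then have GR: "G \<in> RC q e" and fG: "fst G = n" using Gs by auto
    show "snd G xs = ((\<lambda>y. q n y xs) \<circ> (\<lambda>G. snd G (es e n))) G"
      using RC_D(4)[OF GR, of xs] that fG by simp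
  qed
  have sH: "snd ?H xs = q ?k (cv F) (map (\<lambda>y. q n y xs) cs)" if "length xs = n" for xs
  proof -
    have "snd ?H xs = snd F (map (\<lambda>G. snd G xs) Gs)" using that by (simp add: compose_op_def mk_op_snd)
    also have "\<dots> = q ?k (cv F) (map (\<lambda>G. snd G xs) Gs)" using RC_D(4)[OF F, of "map (\<lambda>G. snd G xs) Gs"] lG by simp
    finally show ?thesis using mapG[OF that] by simp
  qed
  have cvH: "cv ?H = q ?k (cv F) cs"
    using sH[of "es e n"] by (simp add: compose_op_def C3)
  have fF: "finite_dim q e (cv F)" and dF: "dim q e (cv F) \<le> ?k" using RC_D(2,3)[OF F] by auto
  have ind: "indep q e (cv ?H) j" if j: "n < j" for j
  proof -
    have "\<forall>y\<in>set cs. indep q e y j"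
    proof
      fix y assume "y \<in> set cs"
      then obtain G where G: "G \<in> set Gs" and y: "y = snd G (es e n)" by (auto simp: cs_def)
      have GR: "G \<in> RC q e" and fG: "fst G = n" using Gs G by auto
      show "indep q e y j" using indep_gt_dim[OF RC_D(2)[OF GR]] RC_D(3)[OF GR] fG y j by simp
    qed
    then show ?thesis using L8[OF fF dF lc] j cvH by simp
  qed
  show ?thesis
  proof (rule RC_I)
    show "is_op ?H" by (simp add: compose_op_def)
    have "finite_dim q e (cv ?H) \<and> dim q e (cv ?H) \<le> n" using ind by (intro dim_le_I) auto
    then show "finite_dim q e (cv ?H)" "dim q e (cv ?H) \<le> fst ?H" by (auto simp: compose_op_def)
    fix xs :: "'a list" assume l: "length xs = fst ?H"
    then have l': "length xs = n" by (simp add: compose_op_def)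
    show "snd ?H xs = q (fst ?H) (cv ?H) xs"
      using sH[OF l'] L9[OF fF dF lc l'] cvH by (simp add: compose_op_def)
  qed
qed

lemma restr_RC:
  assumes F: "F \<in> RC q e" and fF: "fst F = Suc n"
    and nd: "\<forall>xs b b'. length xs = n \<longrightarrow> snd F (xs @ [b]) = snd F (xs @ [b'])"
  shows "mk_op n (\<lambda>xs. snd F (xs @ [undefined])) \<in> RC q e"
proof -
  let ?H = "mk_op n (\<lambda>xs. snd F (xs @ [undefined]))"
  have cvF: "cv F = snd F (es e n @ [e (Suc n)])" using fF by (simp add: es_Suc)
  have cvH: "cv ?H = cv F" using nd cvF by (simp add: mk_op_snd)
  have fd: "finite_dim q e (cv F)" and dF: "dim q e (cv F) \<le> Suc n" using RC_D(2,3)[OF F] fF by auto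
  have "q (Suc n) (cv F) (map e [1..<Suc n] @ [e (Suc (Suc n))]) = snd F (es e n @ [e (Suc (Suc n))])"
    using RC_D(4)[OF F, of "es e n @ [e (Suc (Suc n))]"] fF by (simp add: es_def)
  also have "\<dots> = cv F" using nd cvF by simp
  finally have ind: "indep q e (cv F) (Suc n)" by (simp add: indep_def)
  have dn: "dim q e (cv F) \<le> n"
  proof (rule ccontr)
    assume "\<not> dim q e (cv F) \<le> n"
    then have eq: "dim q e (cv F) = Suc n" using dF by simp
    then have "depset q e (cv F) \<noteq> {}" by (auto simp: dim_def)
    then have "Suc n \<in> depset q e (cv F)" using fd eq Max_in[of "depset q e (cv F)"] by (auto simp: dim_def finite_dim_def)
    then show False using ind by (simp add: depset_def)
  qed
  show ?thesis
  proof (rule RC_I)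
    show "is_op ?H" by simp
    show "finite_dim q e (cv ?H)" "dim q e (cv ?H) \<le> fst ?H" using cvH fd dn by auto
    fix xs :: "'a list" assume l: "length xs = fst ?H"
    then have l': "length xs = n" by simp
    have "snd ?H xs = q (Suc n) (cv F) (xs @ [undefined])"
      using RC_D(4)[OF F, of "xs @ [undefined]"] fF l' by (simp add: mk_op_snd)
    also have "\<dots> = q n (cv F) xs" using L2[OF fd dn, of "Suc n" "xs @ [undefined]"] l' by simp
    finally show "snd ?H xs = q (fst ?H) (cv ?H) xs" using cvH by simp
  qed
qed

lemma clone: "is_clone ar sig (RC q e)"
  unfolding is_clone_def
  using RC_D(1) proj_RC sig_RC comp_RC restr_RC by (auto simp: Ops_def)

end

theorem proposition7p4:
  fixes ar :: "'s \<Rightarrow> nat" and sig :: "'s \<Rightarrow> 'a list \<Rightarrow> 'a"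
    and q :: "nat \<Rightarrow> 'a \<Rightarrow> 'a list \<Rightarrow> 'a" and e :: "nat \<Rightarrow> 'a"
    and a b :: 'a
  assumes C: "clone_algebra ar sig q e"
    and a: "a \<in> Fi q e" and b: "b \<in> Fi q e"
  shows "(\<forall>F\<in>RC q e. \<forall>G\<in>RC q e.
            similar F G \<longleftrightarrow> snd F (es e (fst F)) = snd G (es e (fst G)))
       \<and> is_block (Rof q e a)
       \<and> (Rof q e a = Rof q e b \<longrightarrow> a = b)
       \<and> RC q e = (\<Union>c\<in>Fi q e. Rof q e c) \<and> is_clone ar sig (RC q e)
       \<and> (\<forall>k. block_arity (Rof q e a) = k \<longleftrightarrow> dim q e a = k)"
proof -
  interpret ca ar sig q e by (rule ca.intro[OF C])
  have fa: "finite_dim q e a" using a by (simp add: Fi_def)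
  have p1: "\<forall>F\<in>RC q e. \<forall>G\<in>RC q e. similar F G \<longleftrightarrow> snd F (es e (fst F)) = snd G (es e (fst G))"
    using part1 by blast
  have "F0 a \<in> Ops" by (simp add: Ops_def F0_def)
  then have p2: "is_block (Rof q e a)"
    unfolding is_block_def using block_eq[OF fa] by blast
  have p3: "Rof q e a = Rof q e b \<longrightarrow> a = b"
  proof
    assume "Rof q e a = Rof q e b"
    then have "F0 a \<in> Rof q e b" using F0_Rof[OF fa] by simp
    then show "a = b" by (simp add: Rof_def)
  qed
  have p4: "RC q e = (\<Union>c\<in>Fi q e. Rof q e c)"
    using RC_D(2) by (auto simp: Rof_def Fi_def)
  show ?thesis using p1 p2 p3 p4 clone part5[OF fa] by simp
qed

end
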